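(* Let $\beta\in\mathbb{C}$ with $|\beta|=1$, $m\in\mathrm{Hol}(\mathbb{D})$, $m\not\equiv0$, $T:\mathrm{Hol}(\mathbb{D})\to\mathrm{Hol}(\mathbb{D})$ given by $(Tf)(z)=m(z)f(\beta z)$, and let $T_0$ be the restriction of $T$ to $\mathrm{Hol}_0(\mathbb{D})=\{f\in\mathrm{Hol}(\mathbb{D}):f(0)=0\}$. Then (a) $m(0)\in\sigma(T)$; (b) $\rho(T)\subset\rho(T_0)$; (c) $\rho(T_0)\subset\rho(T)\cup\{m(0)\}$.
   Context: $\mathbb{D}$ is the open unit disc, $\mathrm{Hol}(\mathbb{D})$ the space of holomorphic functions on $\mathbb{D}$. For a linear operator $S$ on a space $Y$, $\rho(S)$ is the set of $\lambda\in\mathbb{C}$ with $\lambda\mathrm{Id}-S$ bijective on $Y$ and $\sigma(S)=\mathbb{C}\setminus\rho(S)$. *)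

theory Defs
  imports "HOL-Complex_Analysis.Complex_Analysis"
begin

text \<open>Hol(D), represented extensionally: holomorphic functions on the unit disc,
  normalised to be 0 outside the disc, so that equality of elements is equality on D.\<close>
definition Hol :: "(complex \<Rightarrow> complex) set" where
  "Hol = {f. f holomorphic_on ball 0 1 \<and> (\<forall>z. z \<notin> ball 0 1 \<longrightarrow> f z = 0)}"

definition Hol0 :: "(complex \<Rightarrow> complex) set" where
  "Hol0 = {f \<in> Hol. f 0 = 0}"

definition wcomp :: "(complex \<Rightarrow> complex) \<Rightarrow> complex \<Rightarrow> (complex \<Rightarrow> complex) \<Rightarrow> (complex \<Rightarrow> complex)" where
  "wcomp m \<beta> f = (\<lambda>z. if z \<in> ball 0 1 then m z * f (\<beta> * z) else 0)"

definition resolvent_set :: "(('a \<Rightarrow> complex) \<Rightarrow> ('a \<Rightarrow> complex)) \<Rightarrow> ('a \<Rightarrow> complex) set \<Rightarrow> complex set" where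
  "resolvent_set S Y = {c. bij_betw (\<lambda>f. (\<lambda>z. c * f z - S f z)) Y Y}"

definition spectrum_op :: "(('a \<Rightarrow> complex) \<Rightarrow> ('a \<Rightarrow> complex)) \<Rightarrow> ('a \<Rightarrow> complex) set \<Rightarrow> complex set" where
  "spectrum_op S Y = - resolvent_set S Y"

end

theory Submission
  imports Defs
begin

lemma Hol_zero_out: "f \<in> Hol \<Longrightarrow> z \<notin> ball 0 1 \<Longrightarrow> f z = 0"
  by (simp add: Hol_def)

lemma Hol_T:
  assumes b: "norm \<beta> = 1" and m: "m holomorphic_on ball 0 1" and f: "f \<in> Hol"
  shows "wcomp m \<beta> f \<in> Hol"
proof -
  have fh: "f holomorphic_on ball 0 1" using f by (simp add: Hol_def)
  have sub: "(\<lambda>z. \<beta> * z) ` ball 0 1 \<subseteq> ball 0 1"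
    using b by (auto simp: norm_mult)
  have "(\<lambda>z. f (\<beta> * z)) holomorphic_on ball 0 1"
    using holomorphic_on_compose_gen[OF _ fh sub, unfolded o_def]
    by (simp add: holomorphic_intros)
  hence "(\<lambda>z. m z * f (\<beta> * z)) holomorphic_on ball 0 1"
    using m by (intro holomorphic_intros)
  hence "wcomp m \<beta> f holomorphic_on ball 0 1"
    by (rule holomorphic_transform) (simp add: wcomp_def)
  thus ?thesis by (simp add: Hol_def wcomp_def)
qed

lemma Hol_L:
  assumes b: "norm \<beta> = 1" and m: "m holomorphic_on ball 0 1" and f: "f \<in> Hol"
  shows "(\<lambda>z. c * f z - wcomp m \<beta> f z) \<in> Hol"
proof -
  have "wcomp m \<beta> f \<in> Hol" using Hol_T[OF b m f] .
  thus ?thesis using f unfolding Hol_def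
    by (auto intro!: holomorphic_intros)
qed

lemma L0: "(\<lambda>z. c * f z - wcomp m \<beta> f z) 0 = (c - m 0) * f 0"
  by (simp add: wcomp_def algebra_simps)

lemma Hol_add: "f \<in> Hol \<Longrightarrow> g \<in> Hol \<Longrightarrow> (\<lambda>z. f z + g z) \<in> Hol"
  by (auto simp: Hol_def intro!: holomorphic_intros)

lemma Hol_diff: "f \<in> Hol \<Longrightarrow> g \<in> Hol \<Longrightarrow> (\<lambda>z. f z - g z) \<in> Hol"
  by (auto simp: Hol_def intro!: holomorphic_intros)

lemma Hol_ind: "(\<lambda>z. if z \<in> ball 0 1 then a else 0) \<in> Hol"
proof -
  have "(\<lambda>z. if z \<in> ball 0 1 then a else 0) holomorphic_on ball 0 1"
    by (rule holomorphic_transform[of "\<lambda>_. a"]) (auto intro: holomorphic_intros)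
  thus ?thesis by (simp add: Hol_def)
qed

theorem lemma2p4:
  fixes \<beta> :: complex and m :: "complex \<Rightarrow> complex"
  assumes "norm \<beta> = 1"
    and "m holomorphic_on ball 0 1"
    and "\<exists>z\<in>ball 0 1. m z \<noteq> 0"
  shows "m 0 \<in> spectrum_op (wcomp m \<beta>) Hol \<and>
         resolvent_set (wcomp m \<beta>) Hol \<subseteq> resolvent_set (wcomp m \<beta>) Hol0 \<and>
         resolvent_set (wcomp m \<beta>) Hol0 \<subseteq> resolvent_set (wcomp m \<beta>) Hol \<union> {m 0}"
proof -
  note b = assms(1) and mh = assms(2)
  define L where "L c f = (\<lambda>z. c * f z - wcomp m \<beta> f z)" for c f
  have LH: "f \<in> Hol \<Longrightarrow> L c f \<in> Hol" for c f unfolding L_def by (rule Hol_L[OF b mh])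
  have L0': "L c f 0 = (c - m 0) * f 0" for c f unfolding L_def by (rule L0)
  have one: "(\<lambda>z. if z \<in> ball 0 1 then (1::complex) else 0) \<in> Hol" by (rule Hol_ind)
  have A: "m 0 \<notin> resolvent_set (wcomp m \<beta>) Hol"
  proof
    assume "m 0 \<in> resolvent_set (wcomp m \<beta>) Hol"
    hence "L (m 0) ` Hol = Hol" unfolding resolvent_set_def L_def bij_betw_def by simp
    with one obtain f where "f \<in> Hol" "L (m 0) f = (\<lambda>z. if z \<in> ball 0 1 then 1 else 0)"
      by (metis imageE)
    hence "L (m 0) f 0 = 1" by simp
    with L0' show False by simp
  qed
  have B: "resolvent_set (wcomp m \<beta>) Hol \<subseteq> resolvent_set (wcomp m \<beta>) Hol0"
  proof
    fix c assume c: "c \<in> resolvent_set (wcomp m \<beta>) Hol"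
    hence cm: "c \<noteq> m 0" using A by auto
    from c have inj: "inj_on (L c) Hol" and surj: "L c ` Hol = Hol"
      unfolding resolvent_set_def L_def bij_betw_def by auto
    have "inj_on (L c) Hol0" using inj by (rule inj_on_subset) (auto simp: Hol0_def)
    moreover have "L c ` Hol0 = Hol0"
    proof
      show "L c ` Hol0 \<subseteq> Hol0" using LH L0' by (auto simp: Hol0_def)
      show "Hol0 \<subseteq> L c ` Hol0"
      proof
        fix g assume g: "g \<in> Hol0"
        then obtain f where f: "f \<in> Hol" "g = L c f" using surj by (auto simp: Hol0_def)
        have "(c - m 0) * f 0 = 0" using g f L0'[of c f] by (simp add: Hol0_def)
        hence "f 0 = 0" using cm by simp
        thus "g \<in> L c ` Hol0" using f by (auto simp: Hol0_def)
      qed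
    qed
    ultimately show "c \<in> resolvent_set (wcomp m \<beta>) Hol0"
      unfolding resolvent_set_def L_def bij_betw_def by simp
  qed
  have C: "resolvent_set (wcomp m \<beta>) Hol0 \<subseteq> resolvent_set (wcomp m \<beta>) Hol \<union> {m 0}"
  proof
    fix c assume c: "c \<in> resolvent_set (wcomp m \<beta>) Hol0"
    show "c \<in> resolvent_set (wcomp m \<beta>) Hol \<union> {m 0}"
    proof (cases "c = m 0")
      case True thus ?thesis by simp
    next
      case False
      hence cm: "c - m 0 \<noteq> 0" by simp
      from c have inj: "inj_on (L c) Hol0" and surj: "L c ` Hol0 = Hol0"
        unfolding resolvent_set_def L_def bij_betw_def by auto
      have "inj_on (L c) Hol"
      proof (rule inj_onI)
        fix f g assume f: "f \<in> Hol" and g: "g \<in> Hol" and e: "L c f = L c g"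
        define h where "h = (\<lambda>z. f z - g z)"
        have hH: "h \<in> Hol" unfolding h_def using f g by (rule Hol_diff)
        have Lh: "L c h = (\<lambda>z. L c f z - L c g z)"
          unfolding L_def h_def wcomp_def by (auto simp: algebra_simps)
        have "L c h 0 = 0" using e Lh by simp
        hence "h 0 = 0" using L0'[of c h] cm by simp
        hence h0: "h \<in> Hol0" using hH by (simp add: Hol0_def)
        have z0: "(\<lambda>z. 0::complex) \<in> Hol0" by (simp add: Hol0_def Hol_def)
        have "L c h = L c (\<lambda>z. 0)" using e Lh by (simp add: L_def wcomp_def fun_eq_iff)
        hence "h = (\<lambda>z. 0)" using inj h0 z0 by (meson inj_onD)
        thus "f = g" unfolding h_def by (auto simp: fun_eq_iff)
      qed
      moreover have "L c ` Hol = Hol"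
      proof
        show "L c ` Hol \<subseteq> Hol" using LH by auto
        show "Hol \<subseteq> L c ` Hol"
        proof
          fix g assume g: "g \<in> Hol"
          define a where "a = g 0 / (c - m 0)"
          define e where "e = (\<lambda>z::complex. if z \<in> ball 0 1 then a * (c - m z) else 0)"
          define ind where "ind = (\<lambda>z::complex. if z \<in> ball 0 1 then a else 0)"
          have indH: "ind \<in> Hol" unfolding ind_def by (rule Hol_ind)
          have Lind: "L c ind = e"
            using b unfolding L_def ind_def e_def wcomp_def
            by (auto simp: fun_eq_iff norm_mult algebra_simps)
          have eH: "e \<in> Hol" using LH[OF indH, of c] Lind by simp
          have "(\<lambda>z. g z - e z) \<in> Hol0"
            using Hol_diff[OF g eH] cm by (simp add: Hol0_def e_def a_def)
          then obtain h where h: "h \<in> Hol0" "(\<lambda>z. g z - e z) = L c h"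
            using surj by (metis imageE)
          have hH: "h \<in> Hol" using h by (simp add: Hol0_def)
          have "L c (\<lambda>z. h z + ind z) = (\<lambda>z. L c h z + L c ind z)"
            unfolding L_def wcomp_def by (auto simp: fun_eq_iff algebra_simps)
          also have "\<dots> = g" using h(2)[symmetric] Lind by (simp add: fun_eq_iff)
          finally show "g \<in> L c ` Hol" using Hol_add[OF hH indH] by (metis imageI)
        qed
      qed
      ultimately show ?thesis
        unfolding resolvent_set_def L_def bij_betw_def by simp
    qed
  qed
  show ?thesis using A B C by (simp add: spectrum_op_def)
qed

end
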